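(* Let $V$ be a finite vocabulary and $\mathcal{M}$ a transformer language model with deterministic forward pass and next-token probabilities $P_{\mathcal{M}}(t\mid t_1,\ldots,t_{i-1})$. Let $(t_1,\ldots,t_n)$ be a random token sequence drawn from $P_{\mathcal{M}}$, let $\mathrm{KV}_i = F_{\mathcal{M}}(t_1,\ldots,t_i)$ be the key–value state at position $i$, and assume the layer-1 key vectors $W_K^{(1)}E(t)$, $t\in V$, are pairwise distinct. Define the perplexity $\mathrm{PP}(\mathcal{M})$ by $\log_2\mathrm{PP}(\mathcal{M}) = \frac1n\,\mathbb{E}\bigl[-\log_2 P_{\mathcal{M}}(t_1,\ldots,t_n)\bigr]$. Then \[ \frac1n\sum_{i=1}^n H\bigl(\mathrm{KV}_i \mid \mathrm{KV}_{\leq i-1}\bigr) \;\leq\; \log_2 \mathrm{PP}(\mathcal{M}), \] where for $i=1$ the term is $H(\mathrm{KV}_1)$. In particular, if $\mathrm{PP}(\mathcal{M})\le 20$ the left side is at most $\log_2 20\approx 4.3$ bits.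
   Context: The transformer has $L$ layers, $H_{\mathrm{head}}$ heads and head dimension $d$; $F_{\mathcal{M}}:V^i\to\mathbb{R}^{2LH_{\mathrm{head}}d}$ is the deterministic map sending a prefix to the concatenation over all layers of the key and value vectors at position $i$. This vector contains the layer-1 key $W_K^{(1)}E(t_i)$, with $E$ the token embedding and $W_K^{(1)}$ the layer-1 key projection. $\mathrm{KV}_{\le i-1}=(\mathrm{KV}_1,\ldots,\mathrm{KV}_{i-1})$. Entropies are Shannon entropies in bits of these finitely-valued random variables. *)

theory Defs
  imports Complex_Main
begin

definition prob_of :: "('o \<Rightarrow> real) \<Rightarrow> 'o set \<Rightarrow> ('o \<Rightarrow> 'x) \<Rightarrow> 'x \<Rightarrow> real" where
  "prob_of p \<Omega> X x = (\<Sum>\<omega>\<in>{\<omega>\<in>\<Omega>. X \<omega> = x}. p \<omega>)"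

definition entropy2 :: "('o \<Rightarrow> real) \<Rightarrow> 'o set \<Rightarrow> ('o \<Rightarrow> 'x) \<Rightarrow> real" where
  "entropy2 p \<Omega> X = - (\<Sum>x\<in>X ` \<Omega>. prob_of p \<Omega> X x * log 2 (prob_of p \<Omega> X x))"

definition cond_entropy2 :: "('o \<Rightarrow> real) \<Rightarrow> 'o set \<Rightarrow> ('o \<Rightarrow> 'x) \<Rightarrow> ('o \<Rightarrow> 'y) \<Rightarrow> real" where
  "cond_entropy2 p \<Omega> X Y =
     - (\<Sum>(x, y)\<in>(\<lambda>\<omega>. (X \<omega>, Y \<omega>)) ` \<Omega>.
          prob_of p \<Omega> (\<lambda>\<omega>. (X \<omega>, Y \<omega>)) (x, y) *
          log 2 (prob_of p \<Omega> (\<lambda>\<omega>. (X \<omega>, Y \<omega>)) (x, y) / prob_of p \<Omega> Y y))"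

definition seqs :: "nat \<Rightarrow> 'v list set" where
  "seqs n = {xs. length xs = n}"

definition seq_prob :: "('v list \<Rightarrow> 'v \<Rightarrow> real) \<Rightarrow> 'v list \<Rightarrow> real" where
  "seq_prob P xs = (\<Prod>i<length xs. P (take i xs) (xs ! i))"

definition KV :: "('v list \<Rightarrow> 'a) \<Rightarrow> nat \<Rightarrow> 'v list \<Rightarrow> 'a" where
  "KV F i xs = F (take i xs)"

text \<open>KV_{<= i-1} = (KV_1, ..., KV_{i-1}); empty (constant) for i = 1.\<close>
definition KV_upto :: "('v list \<Rightarrow> 'a) \<Rightarrow> nat \<Rightarrow> 'v list \<Rightarrow> 'a list" where
  "KV_upto F i xs = map (\<lambda>j. KV F j xs) [1..<i]"

definition perplexity :: "('v list \<Rightarrow> 'v \<Rightarrow> real) \<Rightarrow> nat \<Rightarrow> real" where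
  "perplexity P n = 2 powr ((1 / real n) *
      (\<Sum>xs\<in>seqs n. seq_prob P xs * (- log 2 (seq_prob P xs))))"

end

theory Submission
  imports Defs
begin

lemma fiber_sum:
  assumes "finite \<Omega>"
  shows "(\<Sum>z\<in>f ` \<Omega>. prob_of p \<Omega> f z * g z) = (\<Sum>\<omega>\<in>\<Omega>. p \<omega> * g (f \<omega>))"
proof -
  have "(\<Sum>\<omega>\<in>\<Omega>. p \<omega> * g (f \<omega>)) = (\<Sum>z\<in>f ` \<Omega>. \<Sum>\<omega>\<in>{x\<in>\<Omega>. f x = z}. p \<omega> * g (f \<omega>))"
    using sum.image_gen[OF assms] by blast
  also have "\<dots> = (\<Sum>z\<in>f ` \<Omega>. prob_of p \<Omega> f z * g z)"
    unfolding prob_of_def sum_distrib_right by (intro sum.cong refl) auto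
  finally show ?thesis by simp
qed

lemma telescope:
  fixes f :: "nat \<Rightarrow> real" and n :: nat
  shows "(\<Sum>i=1..n. (f i - f (i - 1))) = f n - f 0"
  by (induction n) auto

lemma seq_prob_snoc: "seq_prob P (xs @ [t]) = seq_prob P xs * P xs t"
proof -
  have "seq_prob P (xs @ [t]) = (\<Prod>i<Suc (length xs). P (take i (xs @ [t])) ((xs @ [t]) ! i))"
    unfolding seq_prob_def by simp
  also have "\<dots> = (\<Prod>i<length xs. P (take i (xs @ [t])) ((xs @ [t]) ! i)) * P xs t"
    by simp
  also have "(\<Prod>i<length xs. P (take i (xs @ [t])) ((xs @ [t]) ! i)) = seq_prob P xs"
    unfolding seq_prob_def by (intro prod.cong refl) (auto simp: nth_append)
  finally show ?thesis .
qed

lemma seqs_Suc: "seqs (Suc n) = (\<lambda>(xs, t). xs @ [t]) ` (seqs n \<times> UNIV)"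
proof
  show "seqs (Suc n) \<subseteq> (\<lambda>(xs, t). xs @ [t]) ` (seqs n \<times> UNIV)"
  proof
    fix ys assume "ys \<in> seqs (Suc n)"
    then have l: "length ys = Suc n" by (simp add: seqs_def)
    then have "ys = butlast ys @ [last ys]"
      by (metis append_butlast_last_id list.size(3) nat.distinct(1))
    moreover have "butlast ys \<in> seqs n" using l by (simp add: seqs_def)
    ultimately show "ys \<in> (\<lambda>(xs, t). xs @ [t]) ` (seqs n \<times> UNIV)" by force
  qed
qed (auto simp: seqs_def)

lemma seq_prob_sum:
  fixes P :: "'v::finite list \<Rightarrow> 'v \<Rightarrow> real"
  assumes P_sum: "\<And>xs. (\<Sum>t\<in>UNIV. P xs t) = 1"
  shows "(\<Sum>xs\<in>seqs n. seq_prob P xs) = 1"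
proof (induction n)
  case 0
  have "(seqs 0 :: 'v list set) = {[]}" by (auto simp: seqs_def)
  then show ?case by (simp add: seq_prob_def)
next
  case (Suc n)
  have inj: "inj_on (\<lambda>(xs, t). xs @ [t]) (seqs n \<times> (UNIV :: 'v set))"
    by (auto simp: inj_on_def)
  have fin: "finite (seqs n :: 'v list set)" by (simp add: seqs_def finite_list_length)
  have "(\<Sum>xs\<in>seqs (Suc n). seq_prob P xs) = (\<Sum>(xs, t)\<in>seqs n \<times> UNIV. seq_prob P (xs @ [t]))"
    unfolding seqs_Suc by (subst sum.reindex[OF inj]) (simp add: case_prod_unfold)
  also have "\<dots> = (\<Sum>xs\<in>seqs n. \<Sum>t\<in>UNIV. seq_prob P xs * P xs t)"
    by (subst sum.cartesian_product[symmetric]) (simp add: seq_prob_snoc)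
  also have "\<dots> = (\<Sum>xs\<in>seqs n. seq_prob P xs)"
    by (simp add: sum_distrib_left[symmetric] P_sum)
  finally show ?case using Suc by simp
qed

lemma KV_upto_Suc: "KV_upto F (Suc k + 1) xs = KV_upto F (k + 1) xs @ [KV F (Suc k) xs]"
  unfolding KV_upto_def by simp

lemma KV_upto_eq:
  assumes key_component: "\<And>xs t. key1 (F (xs @ [t])) = WK (E t)"
    and keys_distinct: "inj (\<lambda>t. WK (E t))"
  shows "k \<le> length w \<Longrightarrow> k \<le> length w' \<Longrightarrow>
     (KV_upto F (k + 1) w = KV_upto F (k + 1) w') \<longleftrightarrow> take k w = take k w'"
proof (induction k)
  case 0
  then show ?case by (simp add: KV_upto_def)
next
  case (Suc k)
  show ?case
  proof
    assume h: "KV_upto F (Suc k + 1) w = KV_upto F (Suc k + 1) w'"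
    then have a: "KV_upto F (k + 1) w = KV_upto F (k + 1) w'" and
      b: "KV F (Suc k) w = KV F (Suc k) w'"
      unfolding KV_upto_Suc by auto
    have tk: "take k w = take k w'" using Suc a by simp
    have tw: "take (Suc k) w = take k w @ [w ! k]" using Suc.prems
      by (simp add: take_Suc_conv_app_nth)
    have tw': "take (Suc k) w' = take k w' @ [w' ! k]" using Suc.prems
      by (simp add: take_Suc_conv_app_nth)
    have "key1 (F (take (Suc k) w)) = key1 (F (take (Suc k) w'))"
      using b by (simp add: KV_def)
    then have "WK (E (w ! k)) = WK (E (w' ! k))"
      unfolding tw tw' key_component .
    then have "w ! k = w' ! k" using keys_distinct by (auto dest: injD)
    then show "take (Suc k) w = take (Suc k) w'" using tw tw' tk by simp
  next
    assume h: "take (Suc k) w = take (Suc k) w'"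
    show "KV_upto F (Suc k + 1) w = KV_upto F (Suc k + 1) w'"
      unfolding KV_upto_def KV_def
    proof (intro map_cong refl)
      fix j assume "j \<in> set [1..<Suc k + 1]"
      then have "j \<le> Suc k" by auto
      then have "take j w = take j (take (Suc k) w)" "take j w' = take j (take (Suc k) w')"
        by (simp_all add: min_def)
      then show "F (take j w) = F (take j w')" using h by simp
    qed
  qed
qed

theorem mainTheorem2:
  fixes P :: "'v::finite list \<Rightarrow> 'v \<Rightarrow> real"
    and F :: "'v list \<Rightarrow> 'a"
    and key1 :: "'a \<Rightarrow> 'k"
    and E :: "'v \<Rightarrow> 'e"
    and WK :: "'e \<Rightarrow> 'k"
    and n :: nat
  assumes n_pos: "n \<ge> 1"
    and P_nonneg: "\<And>xs t. P xs t \<ge> 0"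
    and P_sum: "\<And>xs. (\<Sum>t\<in>UNIV. P xs t) = 1"
    and key_component: "\<And>xs t. key1 (F (xs @ [t])) = WK (E t)"
    and keys_distinct: "inj (\<lambda>t. WK (E t))"
  shows "(1 / real n) * (\<Sum>i=1..n. cond_entropy2 (seq_prob P) (seqs n) (KV F i) (KV_upto F i))
           \<le> log 2 (perplexity P n)
       \<and> (perplexity P n \<le> 20 \<longrightarrow>
           (1 / real n) * (\<Sum>i=1..n. cond_entropy2 (seq_prob P) (seqs n) (KV F i) (KV_upto F i))
             \<le> log 2 20)"
proof -
  define \<Omega> where "\<Omega> = (seqs n :: 'v list set)"
  define p where "p = seq_prob P"
  define m where "m k \<omega> = prob_of p \<Omega> (take k) (take k \<omega>)" for k \<omega>
  have fin: "finite \<Omega>" by (simp add: \<Omega>_def seqs_def finite_list_length)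
  have len: "\<And>\<omega>. \<omega> \<in> \<Omega> \<Longrightarrow> length \<omega> = n" by (simp add: \<Omega>_def seqs_def)
  have pnn: "\<And>\<omega>. p \<omega> \<ge> 0" unfolding p_def seq_prob_def
    by (intro prod_nonneg) (simp add: P_nonneg)
  have psum: "(\<Sum>\<omega>\<in>\<Omega>. p \<omega>) = 1" unfolding p_def \<Omega>_def by (rule seq_prob_sum[OF P_sum])
  have mge: "m k \<omega> \<ge> p \<omega>" if "\<omega> \<in> \<Omega>" for k \<omega>
  proof -
    have "p \<omega> = (\<Sum>x\<in>{\<omega>}. p x)" by simp
    also have "\<dots> \<le> (\<Sum>x\<in>{x\<in>\<Omega>. take k x = take k \<omega>}. p x)"
      using that fin pnn by (intro sum_mono2) auto
    finally show ?thesis by (simp add: m_def prob_of_def)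
  qed
  have m0: "m 0 \<omega> = 1" for \<omega> using psum by (simp add: m_def prob_of_def)
  have mn: "m n \<omega> = p \<omega>" if "\<omega> \<in> \<Omega>" for \<omega>
  proof -
    have "{x\<in>\<Omega>. take n x = take n \<omega>} = {\<omega>}" using that len by auto
    then show ?thesis by (simp add: m_def prob_of_def)
  qed
  have Hi: "cond_entropy2 p \<Omega> (KV F i) (KV_upto F i) =
      - (\<Sum>\<omega>\<in>\<Omega>. p \<omega> * (log 2 (m i \<omega>) - log 2 (m (i - 1) \<omega>)))"
    if i: "i \<in> {1..n}" for i
  proof -
    obtain k where k: "i = k + 1" using i by (metis add.commute add_diff_cancel_left' atLeastAtMost_iff le_add_diff_inverse)
    have eqY: "KV_upto F i \<omega> = KV_upto F i \<omega>' \<longleftrightarrow> take (i - 1) \<omega> = take (i - 1) \<omega>'"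
      if "\<omega> \<in> \<Omega>" "\<omega>' \<in> \<Omega>" for \<omega> \<omega>'
      using KV_upto_eq[of key1 F WK E k \<omega> \<omega>', OF key_component keys_distinct] that len k i by auto
    have eqXY: "((KV F i \<omega>, KV_upto F i \<omega>) = (KV F i \<omega>', KV_upto F i \<omega>')) \<longleftrightarrow> take i \<omega> = take i \<omega>'"
      if "\<omega> \<in> \<Omega>" "\<omega>' \<in> \<Omega>" for \<omega> \<omega>'
    proof -
      have "((KV F i \<omega>, KV_upto F i \<omega>) = (KV F i \<omega>', KV_upto F i \<omega>')) \<longleftrightarrow>
            KV_upto F (Suc k + 1) \<omega> = KV_upto F (Suc k + 1) \<omega>'"
        unfolding KV_upto_Suc k by auto
      also have "\<dots> \<longleftrightarrow> take i \<omega> = take i \<omega>'"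
        using KV_upto_eq[of key1 F WK E "Suc k" \<omega> \<omega>', OF key_component keys_distinct] that len k i by auto
      finally show ?thesis .
    qed
    have pXY: "prob_of p \<Omega> (\<lambda>\<omega>. (KV F i \<omega>, KV_upto F i \<omega>)) (KV F i \<omega>, KV_upto F i \<omega>) = m i \<omega>"
      if "\<omega> \<in> \<Omega>" for \<omega>
      unfolding prob_of_def m_def using eqXY[OF _ that]
      by (intro sum.cong refl) auto
    have pY: "prob_of p \<Omega> (KV_upto F i) (KV_upto F i \<omega>) = m (i - 1) \<omega>"
      if "\<omega> \<in> \<Omega>" for \<omega>
      unfolding prob_of_def m_def using eqY[OF _ that]
      by (intro sum.cong refl) auto
    have "cond_entropy2 p \<Omega> (KV F i) (KV_upto F i) =
       - (\<Sum>z\<in>(\<lambda>\<omega>. (KV F i \<omega>, KV_upto F i \<omega>)) ` \<Omega>.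
          prob_of p \<Omega> (\<lambda>\<omega>. (KV F i \<omega>, KV_upto F i \<omega>)) z *
          (\<lambda>(x, y). log 2 (prob_of p \<Omega> (\<lambda>\<omega>. (KV F i \<omega>, KV_upto F i \<omega>)) (x, y) / prob_of p \<Omega> (KV_upto F i) y)) z)"
      unfolding cond_entropy2_def by (simp add: case_prod_unfold)
    also have "\<dots> = - (\<Sum>\<omega>\<in>\<Omega>. p \<omega> * log 2 (m i \<omega> / m (i - 1) \<omega>))"
      by (subst fiber_sum[OF fin]) (simp add: pXY pY)
    also have "\<dots> = - (\<Sum>\<omega>\<in>\<Omega>. p \<omega> * (log 2 (m i \<omega>) - log 2 (m (i - 1) \<omega>)))"
    proof -
      have "p \<omega> * log 2 (m i \<omega> / m (i - 1) \<omega>) = p \<omega> * (log 2 (m i \<omega>) - log 2 (m (i - 1) \<omega>))"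
        if "\<omega> \<in> \<Omega>" for \<omega>
      proof (cases "p \<omega> = 0")
        case False
        then have "p \<omega> > 0" using pnn[of \<omega>] by simp
        then have "m i \<omega> > 0" "m (i - 1) \<omega> > 0" using mge[OF that] by (auto intro: less_le_trans)
        then show ?thesis by (simp add: log_divide)
      qed simp
      then show ?thesis by (intro arg_cong[where f=uminus] sum.cong) auto
    qed
    finally show ?thesis .
  qed
  have S: "(\<Sum>i=1..n. cond_entropy2 p \<Omega> (KV F i) (KV_upto F i)) =
      (\<Sum>\<omega>\<in>\<Omega>. p \<omega> * (- log 2 (p \<omega>)))"
  proof -
    have "(\<Sum>i=1..n. cond_entropy2 p \<Omega> (KV F i) (KV_upto F i)) =
       (\<Sum>i=1..n. - (\<Sum>\<omega>\<in>\<Omega>. p \<omega> * (log 2 (m i \<omega>) - log 2 (m (i - 1) \<omega>))))"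
      by (intro sum.cong refl) (simp add: Hi)
    also have "\<dots> = - (\<Sum>\<omega>\<in>\<Omega>. p \<omega> * (\<Sum>i=1..n. (log 2 (m i \<omega>) - log 2 (m (i - 1) \<omega>))))"
      by (simp add: sum_negf sum_distrib_left) (rule sum.swap)
    also have "\<dots> = - (\<Sum>\<omega>\<in>\<Omega>. p \<omega> * (log 2 (m n \<omega>) - log 2 (m 0 \<omega>)))"
      by (subst telescope[where f="\<lambda>i. log 2 (m i _)"]) simp
    also have "\<dots> = (\<Sum>\<omega>\<in>\<Omega>. p \<omega> * (- log 2 (p \<omega>)))"
      by (simp add: m0 mn sum_negf[symmetric])
    finally show ?thesis .
  qed
  have eq: "(1 / real n) * (\<Sum>i=1..n. cond_entropy2 (seq_prob P) (seqs n) (KV F i) (KV_upto F i))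
        = log 2 (perplexity P n)"
    unfolding perplexity_def using S by (simp add: p_def \<Omega>_def log_powr_cancel)
  have pos: "perplexity P n > 0" unfolding perplexity_def by simp
  show ?thesis using eq pos by simp
qed

end
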